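(* The minimum singular value $\sigma_{\min}$ of $UP_K$ satisfies $$\sigma_{\min}\ge\inf_{\substack{y\in\mathbb C^N\\ \|y\|=1}}\ \sup_{g\in G_y}\ \sup_{\substack{\phi\in\Phi_K\\ \phi\ne0}}\left\{\frac{1-\|g-\phi\|_{\infty}}{\|g\|_\nu+\|g-\phi\|_\infty}\right\},$$ where $\Phi_K=\mathrm{span}\{\phi_1,\dots,\phi_K\}$ and $G_y=\{g\in L^2_\nu(D)\cap L^\infty(D): g(t_n)=y_n/\sqrt{\tau_n},\ n=1,\dots,N\}$.
   Context: Setting: $D\subseteq\mathbb R^d$ a domain, $\nu\ge0$ integrable on $D$ with $\int_D\nu=1$, $\{\phi_i\}_{i\in\mathbb N}\subseteq L^2_\nu(D)\cap L^\infty(D)$ orthonormal in $L^2_\nu(D)$. $T=\{t_n\}_{n=1}^N\subseteq\overline D$ with Voronoi cells $V_n=\{t\in D:|t-t_n|\le|t-t_m|\ \forall m\ne n\}$ and quadrature weights $\tau_n=\int_{V_n}\nu$ (assumed positive so that $G_y$ is defined). $U$ is the $N\times\infty$ matrix $U_{n,i}=\sqrt{\tau_n}\phi_i(t_n)$, $P_K$ the projection onto the first $K$ coordinates, and $\sigma_{\min}=\inf_{y\in\mathbb C^N,\|y\|=1}\|(UP_K)^*y\|$. $\|g\|_\nu$ is the $L^2_\nu(D)$ norm and $\|\cdot\|_\infty$ the uniform norm on $D$. *)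

theory Defs
  imports "HOL-Analysis.Analysis"
begin

definition L2nu :: "'a::euclidean_space set \<Rightarrow> ('a \<Rightarrow> real) \<Rightarrow> ('a \<Rightarrow> complex) set" where
  "L2nu D \<nu> = {f. set_borel_measurable lebesgue D f \<and>
                   set_integrable lebesgue D (\<lambda>t. \<nu> t * (cmod (f t))\<^sup>2)}"

definition Linf :: "'a::euclidean_space set \<Rightarrow> ('a \<Rightarrow> complex) set" where
  "Linf D = {f. set_borel_measurable lebesgue D f \<and>
                (\<exists>B. AE t in lebesgue. t \<in> D \<longrightarrow> cmod (f t) \<le> B)}"

definition nu_inner :: "'a::euclidean_space set \<Rightarrow> ('a \<Rightarrow> real) \<Rightarrow> ('a \<Rightarrow> complex) \<Rightarrow> ('a \<Rightarrow> complex) \<Rightarrow> complex" where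
  "nu_inner D \<nu> f g = (LINT t:D|lebesgue. complex_of_real (\<nu> t) * (f t * cnj (g t)))"

definition nu_norm :: "'a::euclidean_space set \<Rightarrow> ('a \<Rightarrow> real) \<Rightarrow> ('a \<Rightarrow> complex) \<Rightarrow> real" where
  "nu_norm D \<nu> f = sqrt (LINT t:D|lebesgue. \<nu> t * (cmod (f t))\<^sup>2)"

definition unorm :: "'a set \<Rightarrow> ('a \<Rightarrow> complex) \<Rightarrow> real" where
  "unorm S f = (SUP t\<in>S. cmod (f t))"

definition voronoi :: "'a::euclidean_space set \<Rightarrow> nat \<Rightarrow> (nat \<Rightarrow> 'a) \<Rightarrow> nat \<Rightarrow> 'a set" where
  "voronoi D N t n = {s \<in> D. \<forall>m<N. m \<noteq> n \<longrightarrow> dist s (t n) \<le> dist s (t m)}"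

definition qweight :: "'a::euclidean_space set \<Rightarrow> ('a \<Rightarrow> real) \<Rightarrow> nat \<Rightarrow> (nat \<Rightarrow> 'a) \<Rightarrow> nat \<Rightarrow> real" where
  "qweight D \<nu> N t n = (LINT s:voronoi D N t n|lebesgue. \<nu> s)"

definition Umat :: "'a::euclidean_space set \<Rightarrow> ('a \<Rightarrow> real) \<Rightarrow> nat \<Rightarrow> (nat \<Rightarrow> 'a) \<Rightarrow> (nat \<Rightarrow> 'a \<Rightarrow> complex) \<Rightarrow> nat \<Rightarrow> nat \<Rightarrow> complex" where
  "Umat D \<nu> N t \<phi> n i = complex_of_real (sqrt (qweight D \<nu> N t n)) * \<phi> i (t n)"

text \<open>Euclidean norm of (U P_K)^* y; its nonzero components are indexed by i < K.\<close>
definition adj_norm :: "'a::euclidean_space set \<Rightarrow> ('a \<Rightarrow> real) \<Rightarrow> nat \<Rightarrow> (nat \<Rightarrow> 'a) \<Rightarrow> (nat \<Rightarrow> 'a \<Rightarrow> complex) \<Rightarrow> nat \<Rightarrow> (nat \<Rightarrow> complex) \<Rightarrow> real" where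
  "adj_norm D \<nu> N t \<phi> K y =
     sqrt (\<Sum>i<K. (cmod (\<Sum>n<N. cnj (Umat D \<nu> N t \<phi> n i) * y n))\<^sup>2)"

definition unit_sphere :: "nat \<Rightarrow> (nat \<Rightarrow> complex) set" where
  "unit_sphere N = {y. sqrt (\<Sum>n<N. (cmod (y n))\<^sup>2) = 1}"

definition sigma_min :: "'a::euclidean_space set \<Rightarrow> ('a \<Rightarrow> real) \<Rightarrow> nat \<Rightarrow> (nat \<Rightarrow> 'a) \<Rightarrow> (nat \<Rightarrow> 'a \<Rightarrow> complex) \<Rightarrow> nat \<Rightarrow> ereal" where
  "sigma_min D \<nu> N t \<phi> K = (INF y\<in>unit_sphere N. ereal (adj_norm D \<nu> N t \<phi> K y))"

definition PhiK :: "(nat \<Rightarrow> 'a \<Rightarrow> complex) \<Rightarrow> nat \<Rightarrow> ('a \<Rightarrow> complex) set" where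
  "PhiK \<phi> K = {(\<lambda>s. \<Sum>i<K. c i * \<phi> i s) | c. True}"

definition Gset :: "'a::euclidean_space set \<Rightarrow> ('a \<Rightarrow> real) \<Rightarrow> nat \<Rightarrow> (nat \<Rightarrow> 'a) \<Rightarrow> (nat \<Rightarrow> complex) \<Rightarrow> ('a \<Rightarrow> complex) set" where
  "Gset D \<nu> N t y = {g. g \<in> L2nu D \<nu> \<and> g \<in> Linf D \<and>
      (\<forall>n<N. g (t n) = y n / complex_of_real (sqrt (qweight D \<nu> N t n)))}"

text \<open>The quantity inside the suprema. Only pairs with g - phi bounded on closure D are
  considered (the uniform norm must be finite for the fraction to make sense).\<close>
definition ratio :: "'a::euclidean_space set \<Rightarrow> ('a \<Rightarrow> real) \<Rightarrow> ('a \<Rightarrow> complex) \<Rightarrow> ('a \<Rightarrow> complex) \<Rightarrow> real" where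
  "ratio D \<nu> g p = (1 - unorm (closure D) (\<lambda>s. g s - p s)) /
                    (nu_norm D \<nu> g + unorm (closure D) (\<lambda>s. g s - p s))"

end

theory Submission
  imports Defs
begin

lemma open_leb: "open (D::'a::euclidean_space set) \<Longrightarrow> D \<in> sets lebesgue"
proof -
  assume "open D"
  then have "D \<in> sets lborel" by simp
  then show ?thesis by (rule sets_completionI_sets)
qed
lemma closed_leb: "closed (D::'a::euclidean_space set) \<Longrightarrow> D \<in> sets lebesgue"
proof -
  assume "closed D"
  then have "D \<in> sets lborel" by simp
  then show ?thesis by (rule sets_completionI_sets)
qed
lemma open_leb2: "open (D::'a::euclidean_space set) \<Longrightarrow> D \<inter> space lebesgue \<in> sets lebesgue"
proof -
  assume "open D"
  then have "D \<in> sets lebesgue" by (rule open_leb)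
  moreover have "space lebesgue = UNIV" by simp
  ultimately show ?thesis by simp
qed

lemma disc:
  fixes y c :: "nat \<Rightarrow> complex" and \<tau> :: "nat \<Rightarrow> real" and gt pt :: "nat \<Rightarrow> complex"
    and ph :: "nat \<Rightarrow> nat \<Rightarrow> complex"
  assumes y1: "(\<Sum>n<N. (cmod (y n))\<^sup>2) = 1"
    and tpos: "\<forall>n<N. \<tau> n > 0" and tsum: "(\<Sum>n<N. \<tau> n) \<le> 1"
    and gt: "\<forall>n<N. gt n = y n / complex_of_real (sqrt (\<tau> n))"
    and pt: "\<forall>n<N. pt n = (\<Sum>i<K. c i * ph i n)"
    and eb: "\<forall>n<N. cmod (gt n - pt n) \<le> e"
    and e0: "e \<ge> 0"
  shows "1 - e \<le> sqrt (\<Sum>i<K. (cmod (\<Sum>n<N. cnj (complex_of_real (sqrt (\<tau> n)) * ph i n) * y n))\<^sup>2)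
               * L2_set (\<lambda>i. cmod (c i)) {..<K}"
proof -
  define s where "s n = sqrt (\<tau> n)" for n
  define w where "w i = (\<Sum>n<N. cnj (complex_of_real (s n) * ph i n) * y n)" for i
  define z where "z = (\<Sum>i<K. w i * cnj (c i))"
  have z1: "z = (\<Sum>n<N. y n * complex_of_real (s n) * cnj (pt n))"
    unfolding z_def w_def using pt
    by (simp add: sum_distrib_right sum_distrib_left cnj_sum sum.swap[where A="{..<K}"] mult_ac)
  have ygt: "y n * complex_of_real (s n) * cnj (gt n) = complex_of_real ((cmod (y n))\<^sup>2)" if "n<N" for n
  proof -
    have sp: "s n > 0" using tpos that by (simp add: s_def)
    have "y n * complex_of_real (s n) * cnj (gt n) = y n * cnj (y n)"
      using gt that sp by (simp add: field_simps s_def)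
    then show ?thesis by (simp add: complex_norm_square[symmetric])
  qed
  define r where "r = (\<Sum>n<N. y n * complex_of_real (s n) * cnj (gt n - pt n))"
  have z2: "z = 1 - r"
  proof -
    have "z = (\<Sum>n<N. y n * complex_of_real (s n) * cnj (gt n)) - r"
      unfolding z1 r_def by (simp add: algebra_simps sum_subtractf)
    also have "(\<Sum>n<N. y n * complex_of_real (s n) * cnj (gt n)) = complex_of_real (\<Sum>n<N. (cmod (y n))\<^sup>2)"
      using ygt by simp
    finally show ?thesis using y1 by simp
  qed
  have "cmod r \<le> (\<Sum>n<N. cmod (y n) * s n * e)"
    unfolding r_def
    apply (rule order_trans[OF norm_sum])
    apply (rule sum_mono)
  proof -
    fix n assume n: "n \<in> {..<N}"
    have "cmod (cnj (gt n - pt n)) \<le> e" using eb n by (simp only: complex_mod_cnj) simp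
    moreover have "s n \<ge> 0" by (simp add: s_def) (use tpos n in \<open>auto intro: less_imp_le\<close>)
    ultimately show "cmod (y n * complex_of_real (s n) * cnj (gt n - pt n)) \<le> cmod (y n) * s n * e"
      by (simp add: norm_mult mult_left_mono)
  qed
  also have "\<dots> = e * (\<Sum>n<N. \<bar>cmod (y n)\<bar> * \<bar>s n\<bar>)"
    using tpos by (auto simp: sum_distrib_left mult_ac s_def intro!: sum.cong)
  also have "\<dots> \<le> e * (L2_set (\<lambda>n. cmod (y n)) {..<N} * L2_set s {..<N})"
    by (intro mult_left_mono L2_set_mult_ineq e0)
  also have "L2_set (\<lambda>n. cmod (y n)) {..<N} = 1" using y1 by (simp add: L2_set_def)
  also have "L2_set s {..<N} \<le> 1"
  proof -
    have "(\<Sum>n<N. (s n)\<^sup>2) = (\<Sum>n<N. \<tau> n)" using tpos by (intro sum.cong) (auto simp: s_def)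
    then show ?thesis using tsum by (simp add: L2_set_def)
  qed
  finally have rb: "cmod r \<le> e" using e0 by (simp add: mult_left_mono mult_left_le)
  have "1 - e \<le> cmod z"
  proof -
    have "1 = cmod (z + r)" using z2 by simp
    also have "\<dots> \<le> cmod z + cmod r" by (rule norm_triangle_ineq)
    finally show ?thesis using rb by simp
  qed
  also have "cmod z \<le> (\<Sum>i<K. \<bar>cmod (w i)\<bar> * \<bar>cmod (c i)\<bar>)"
    unfolding z_def by (rule order_trans[OF norm_sum]) (simp add: norm_mult)
  also have "\<dots> \<le> L2_set (\<lambda>i. cmod (w i)) {..<K} * L2_set (\<lambda>i. cmod (c i)) {..<K}"
    by (rule L2_set_mult_ineq)
  finally show ?thesis by (simp add: L2_set_def w_def s_def)
qed



lemma equidist_null: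
  fixes a b :: "'a::euclidean_space"
  assumes "a \<noteq> b"
  shows "{x. dist x a = dist x b} \<in> null_sets lebesgue"
proof -
  have "{x. dist x a = dist x b} = {x. (2 *\<^sub>R (b - a)) \<bullet> x = b \<bullet> b - a \<bullet> a}"
  proof (intro Collect_cong)
    fix x
    have "dist x a = dist x b \<longleftrightarrow> (dist x a)\<^sup>2 = (dist x b)\<^sup>2" by simp
    also have "\<dots> \<longleftrightarrow> (x - a) \<bullet> (x - a) = (x - b) \<bullet> (x - b)"
      by (simp add: dist_norm power2_norm_eq_inner)
    also have "\<dots> \<longleftrightarrow> (2 *\<^sub>R (b - a)) \<bullet> x = b \<bullet> b - a \<bullet> a"
    proof -
      have "(x - a) \<bullet> (x - a) = x \<bullet> x - 2 * (a \<bullet> x) + a \<bullet> a"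
        by (simp add: inner_diff_left inner_diff_right inner_commute[of x a])
      moreover have "(x - b) \<bullet> (x - b) = x \<bullet> x - 2 * (b \<bullet> x) + b \<bullet> b"
        by (simp add: inner_diff_left inner_diff_right inner_commute[of x b])
      moreover have "(2 *\<^sub>R (b - a)) \<bullet> x = 2 * (b \<bullet> x) - 2 * (a \<bullet> x)"
        by (simp add: inner_diff_left)
      ultimately show ?thesis by auto
    qed
    finally show "dist x a = dist x b \<longleftrightarrow> (2 *\<^sub>R (b - a)) \<bullet> x = b \<bullet> b - a \<bullet> a" .
  qed
  moreover have "negligible {x. (2 *\<^sub>R (b - a)) \<bullet> x = b \<bullet> b - a \<bullet> a}"
    using assms by (intro negligible_hyperplane) simp
  ultimately show ?thesis by (simp add: negligible_iff_null_sets)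
qed

lemma voronoi_sets:
  assumes "open D"
  shows "voronoi D N t n \<in> sets lebesgue"
proof -
  have c: "closed {s. \<forall>m<N. m \<noteq> n \<longrightarrow> dist s (t n) \<le> dist s (t m)}"
    by (intro closed_Collect_all closed_Collect_imp closed_Collect_le) (auto intro!: continuous_intros)
  have v: "voronoi D N t n = D \<inter> {s. \<forall>m<N. m \<noteq> n \<longrightarrow> dist s (t n) \<le> dist s (t m)}"
    by (auto simp: voronoi_def)
  have d: "D \<in> sets lebesgue" using assms by (rule open_leb)
  have e: "{s. \<forall>m<N. m \<noteq> n \<longrightarrow> dist s (t n) \<le> dist s (t m)} \<in> sets lebesgue"
    using c by (rule closed_leb)
  show ?thesis unfolding v using d e by (rule sets.Int)
qed

lemma sum_qweight:
  fixes D :: "'a::euclidean_space set"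
  assumes D: "open D" and nn: "\<forall>s\<in>D. \<nu> s \<ge> 0" and int: "set_integrable lebesgue D \<nu>"
    and inj: "inj_on t {..<N}"
  shows "(\<Sum>n<N. qweight D \<nu> N t n) \<le> (LINT s:D|lebesgue. \<nu> s)"
proof -
  let ?V = "voronoi D N t"
  have sub: "?V n \<subseteq> D" for n by (auto simp: voronoi_def)
  have intV: "integrable lebesgue (\<lambda>x. indicator (?V n) x *\<^sub>R \<nu> x)" for n
    using set_integrable_subset[OF int voronoi_sets[OF D] sub] by (simp add: set_integrable_def)
  define Z where "Z = (\<Union>n<N. \<Union>m\<in>{..<N}-{n}. {x. dist x (t n) = dist x (t m)})"
  have Z: "Z \<in> null_sets lebesgue"
    unfolding Z_def
  proof (intro null_sets.finite_UN equidist_null)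
    fix n m assume "n \<in> {..<N}" "m \<in> {..<N} - {n}"
    then show "t n \<noteq> t m" using inj unfolding inj_on_def by blast
  qed auto
  have AE: "AE x in lebesgue. (\<Sum>n<N. indicator (?V n) x *\<^sub>R \<nu> x) \<le> indicator D x *\<^sub>R \<nu> x"
  proof (rule AE_I'[OF Z])
    show "{x \<in> space lebesgue. \<not> (\<Sum>n<N. indicator (?V n) x *\<^sub>R \<nu> x) \<le> indicator D x *\<^sub>R \<nu> x} \<subseteq> Z"
    proof (rule subsetI, rule ccontr)
      fix x assume x: "x \<in> {x \<in> space lebesgue. \<not> (\<Sum>n<N. indicator (?V n) x *\<^sub>R \<nu> x) \<le> indicator D x *\<^sub>R \<nu> x}"
        and xZ: "x \<notin> Z"
      show False
      proof (cases "\<exists>n<N. x \<in> ?V n")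
        case False
        then have "(\<Sum>n<N. indicator (?V n) x *\<^sub>R \<nu> x) = 0" by (intro sum.neutral) simp
        moreover have "0 \<le> indicator D x *\<^sub>R \<nu> x" using nn by (auto simp: indicator_def)
        moreover have "\<not> (\<Sum>n<N. indicator (?V n) x *\<^sub>R \<nu> x) \<le> indicator D x *\<^sub>R \<nu> x" using x by blast
        ultimately show False by linarith
      next
        case True
        then obtain n where n: "n < N" "x \<in> ?V n" by auto
        have oth: "x \<notin> ?V m" if "m < N" "m \<noteq> n" for m
        proof
          assume "x \<in> ?V m"
          then have "dist x (t m) \<le> dist x (t n)" using n that unfolding voronoi_def by blast
          moreover have "dist x (t n) \<le> dist x (t m)" using n that unfolding voronoi_def by blast
          ultimately have "dist x (t n) = dist x (t m)" by simp
          then have "x \<in> Z" unfolding Z_def using n that by blast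
          then show False using xZ by simp
        qed
        have "(\<Sum>m<N. indicator (?V m) x *\<^sub>R \<nu> x) = indicator (?V n) x *\<^sub>R \<nu> x + (\<Sum>m\<in>{..<N}-{n}. indicator (?V m) x *\<^sub>R \<nu> x)"
          using n by (intro sum.remove) simp_all
        also have "(\<Sum>m\<in>{..<N}-{n}. indicator (?V m) x *\<^sub>R \<nu> x) = 0"
          using oth by (intro sum.neutral) simp
        finally have "(\<Sum>m<N. indicator (?V m) x *\<^sub>R \<nu> x) = indicator D x *\<^sub>R \<nu> x"
          using n sub by (simp add: indicator_def subset_iff)
        moreover have "\<not> (\<Sum>n<N. indicator (?V n) x *\<^sub>R \<nu> x) \<le> indicator D x *\<^sub>R \<nu> x" using x by blast
        ultimately show False by linarith
      qed
    qed
  qed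
  have isum: "integrable lebesgue (\<lambda>x. \<Sum>n<N. indicator (?V n) x *\<^sub>R \<nu> x)"
    by (rule Bochner_Integration.integrable_sum) (rule intV)
  have eq: "integral\<^sup>L lebesgue (\<lambda>x. \<Sum>n<N. indicator (?V n) x *\<^sub>R \<nu> x)
      = (\<Sum>n<N. integral\<^sup>L lebesgue (\<lambda>x. indicator (?V n) x *\<^sub>R \<nu> x))"
    by (rule Bochner_Integration.integral_sum) (rule intV)
  have "(\<Sum>n<N. qweight D \<nu> N t n) = integral\<^sup>L lebesgue (\<lambda>x. \<Sum>n<N. indicator (?V n) x *\<^sub>R \<nu> x)"
    unfolding eq qweight_def set_lebesgue_integral_def by (rule refl)
  also have "\<dots> \<le> integral\<^sup>L lebesgue (\<lambda>x. indicator D x *\<^sub>R \<nu> x)"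
    by (rule integral_mono_AE[OF isum _ AE]) (use int in \<open>simp add: set_integrable_def\<close>)
  finally show ?thesis by (simp add: set_lebesgue_integral_def)
qed



lemma restr_facts:
  fixes D :: "'a::euclidean_space set" and f :: "'a \<Rightarrow> 'b::{banach, second_countable_topology}"
    and g :: "'a \<Rightarrow> 'c::{banach, second_countable_topology}"
  assumes "open D"
  shows "set_integrable lebesgue D f \<longleftrightarrow> integrable (restrict_space lebesgue D) f"
    and "set_lebesgue_integral lebesgue D f = integral\<^sup>L (restrict_space lebesgue D) f"
    and "set_borel_measurable lebesgue D g \<longleftrightarrow> g \<in> borel_measurable (restrict_space lebesgue D)"
proof -
  have D: "D \<inter> space lebesgue \<in> sets lebesgue" using assms by (rule open_leb2)
  show "set_integrable lebesgue D f \<longleftrightarrow> integrable (restrict_space lebesgue D) f"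
    by (rule set_integrable_eq[OF D])
  show "set_lebesgue_integral lebesgue D f = integral\<^sup>L (restrict_space lebesgue D) f"
    by (simp add: set_lebesgue_integral_def integral_restrict_space[OF D])
  show "set_borel_measurable lebesgue D g \<longleftrightarrow> g \<in> borel_measurable (restrict_space lebesgue D)"
    by (simp add: set_borel_measurable_def borel_measurable_restrict_space_iff[OF D])
qed

lemma ab_le:
  fixes u v :: real
  assumes "0 \<le> u" "0 \<le> v"
  shows "u * v \<le> u\<^sup>2 + v\<^sup>2"
proof -
  have "0 \<le> (u - v)\<^sup>2" by simp
  then have "2 * u * v \<le> u\<^sup>2 + v\<^sup>2" by (simp add: power2_diff)
  moreover have "0 \<le> u * v" using assms by simp
  ultimately show ?thesis by linarith
qed

lemma orth_sum:
  fixes D :: "'a::euclidean_space set" and \<phi> :: "nat \<Rightarrow> 'a \<Rightarrow> complex"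
  assumes D: "open D" and nn: "\<forall>s\<in>D. \<nu> s \<ge> 0" and int: "set_integrable lebesgue D \<nu>"
    and L2: "\<forall>i. \<phi> i \<in> L2nu D \<nu>"
    and orth: "\<forall>i j. nu_inner D \<nu> (\<phi> i) (\<phi> j) = (if i = j then 1 else 0)"
  shows "set_integrable lebesgue D (\<lambda>s. \<nu> s * (cmod (\<Sum>i<K. c i * \<phi> i s))\<^sup>2)
     \<and> (LINT s:D|lebesgue. \<nu> s * (cmod (\<Sum>i<K. c i * \<phi> i s))\<^sup>2) = (\<Sum>i<K. (cmod (c i))\<^sup>2)"
proof -
  define M where "M = restrict_space lebesgue D"
  note R = restr_facts[OF D, folded M_def]
  have spM: "space M = D" by (simp add: M_def)
  have mnu[measurable]: "\<nu> \<in> borel_measurable M" proof -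
    have "integrable M \<nu>" by (rule R(1)[THEN iffD1, OF int])
    then show ?thesis by (rule borel_measurable_integrable)
  qed
  have mphi[measurable]: "\<phi> i \<in> borel_measurable M" for i using L2 by (intro R(3)[THEN iffD1]) (simp add: L2nu_def)
  have mcphi[measurable]: "(\<lambda>x. cnj (\<phi> i x)) \<in> borel_measurable M" for i
    by (rule borel_measurable_continuous_on[OF _ mphi]) (intro continuous_intros)
  have iphi: "integrable M (\<lambda>s. \<nu> s * (cmod (\<phi> i s))\<^sup>2)" for i using L2 by (intro R(1)[THEN iffD1]) (simp add: L2nu_def)
  define F where "F i j s = complex_of_real (\<nu> s) * (\<phi> i s * cnj (\<phi> j s))" for i j s
  have iF: "integrable M (F i j)" for i j
  proof (rule Bochner_Integration.integrable_bound)
    show "integrable M (\<lambda>s. \<nu> s * (cmod (\<phi> i s))\<^sup>2 + \<nu> s * (cmod (\<phi> j s))\<^sup>2)"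
      using iphi by simp
    show "F i j \<in> borel_measurable M" unfolding F_def by measurable
    show "AE x in M. norm (F i j x) \<le> norm (\<nu> x * (cmod (\<phi> i x))\<^sup>2 + \<nu> x * (cmod (\<phi> j x))\<^sup>2)"
    proof (rule AE_I2)
      fix x assume "x \<in> space M"
      then have nx: "\<nu> x \<ge> 0" using nn spM by auto
      have ab: "cmod (\<phi> i x) * cmod (\<phi> j x) \<le> (cmod (\<phi> i x))\<^sup>2 + (cmod (\<phi> j x))\<^sup>2"
        by (rule ab_le) simp_all
      have "norm (F i j x) = \<nu> x * (cmod (\<phi> i x) * cmod (\<phi> j x))"
        using nx by (simp add: F_def norm_mult)
      also have "\<dots> \<le> \<nu> x * ((cmod (\<phi> i x))\<^sup>2 + (cmod (\<phi> j x))\<^sup>2)"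
        using nx ab by (rule mult_left_mono[rotated])
      also have "\<dots> \<le> norm (\<nu> x * (cmod (\<phi> i x))\<^sup>2 + \<nu> x * (cmod (\<phi> j x))\<^sup>2)"
        by (simp add: distrib_left)
      finally show "norm (F i j x) \<le> norm (\<nu> x * (cmod (\<phi> i x))\<^sup>2 + \<nu> x * (cmod (\<phi> j x))\<^sup>2)" .
    qed
  qed
  have intF: "integral\<^sup>L M (F i j) = (if i = j then 1 else 0)" for i j
  proof -
    have "integral\<^sup>L M (F i j) = nu_inner D \<nu> (\<phi> i) (\<phi> j)"
      unfolding nu_inner_def F_def by (rule R(2)[symmetric])
    then show ?thesis using orth by simp
  qed
  define Q where "Q s = (\<Sum>i<K. \<Sum>j<K. (c i * cnj (c j)) * F i j s)" for s
  have Qeq: "Q s = complex_of_real (\<nu> s * (cmod (\<Sum>i<K. c i * \<phi> i s))\<^sup>2)" for s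
  proof -
    have "complex_of_real (\<nu> s * (cmod (\<Sum>i<K. c i * \<phi> i s))\<^sup>2)
        = complex_of_real (\<nu> s) * ((\<Sum>i<K. c i * \<phi> i s) * cnj (\<Sum>j<K. c j * \<phi> j s))"
      by (simp only: of_real_mult complex_norm_square)
    also have "\<dots> = Q s"
      by (simp add: Q_def F_def cnj_sum sum_product sum_distrib_left mult_ac) (rule sum.swap)
    finally show ?thesis by simp
  qed
  have iQ: "integrable M Q" unfolding Q_def using iF by simp
  have IQ: "integral\<^sup>L M Q = (\<Sum>i<K. c i * cnj (c i))"
    unfolding Q_def using iF by (simp add: intF if_distrib cong: if_cong)
  have ir: "integrable M (\<lambda>s. \<nu> s * (cmod (\<Sum>i<K. c i * \<phi> i s))\<^sup>2)"
    using iQ unfolding Qeq by (rule complex_of_real_integrable_eq[THEN iffD1])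
  have "complex_of_real (integral\<^sup>L M (\<lambda>s. \<nu> s * (cmod (\<Sum>i<K. c i * \<phi> i s))\<^sup>2))
        = complex_of_real (\<Sum>i<K. (cmod (c i))\<^sup>2)"
  proof -
    have "complex_of_real (integral\<^sup>L M (\<lambda>s. \<nu> s * (cmod (\<Sum>i<K. c i * \<phi> i s))\<^sup>2)) = integral\<^sup>L M Q"
      unfolding Qeq by (rule integral_complex_of_real[symmetric])
    also have "\<dots> = complex_of_real (\<Sum>i<K. (cmod (c i))\<^sup>2)"
      unfolding IQ of_real_sum by (rule sum.cong) (simp_all only: complex_norm_square[symmetric])
    finally show ?thesis .
  qed
  then have "integral\<^sup>L M (\<lambda>s. \<nu> s * (cmod (\<Sum>i<K. c i * \<phi> i s))\<^sup>2) = (\<Sum>i<K. (cmod (c i))\<^sup>2)"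
    by (simp only: of_real_eq_iff)
  moreover have "set_lebesgue_integral lebesgue D (\<lambda>s. \<nu> s * (cmod (\<Sum>i<K. c i * \<phi> i s))\<^sup>2)
     = integral\<^sup>L M (\<lambda>s. \<nu> s * (cmod (\<Sum>i<K. c i * \<phi> i s))\<^sup>2)" by (rule R(2))
  ultimately show ?thesis using R(1)[THEN iffD2, OF ir] by simp
qed



lemma lam_bound:
  fixes X A e :: real
  assumes h: "\<And>l. l > 0 \<Longrightarrow> X \<le> (1 + l) * A\<^sup>2 + (1 + 1 / l) * e\<^sup>2"
    and A: "A \<ge> 0" and e: "e \<ge> 0"
  shows "X \<le> (A + e)\<^sup>2"
proof (cases "A > 0 \<and> e > 0")
  case True
  have "X \<le> (1 + e / A) * A\<^sup>2 + (1 + 1 / (e / A)) * e\<^sup>2" using True by (intro h) simp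
  also have "\<dots> = (A + e)\<^sup>2" using True by (simp add: field_simps power2_eq_square)
  finally show ?thesis .
next
  case False
  show ?thesis
  proof (rule ccontr)
    assume c: "\<not> X \<le> (A + e)\<^sup>2"
    show False
    proof (cases "A = 0")
      case A0: True
      show False
      proof (cases "e = 0")
        case True
        then show False using h[of 1] c A0 by simp
      next
        case False
        then have ep: "e > 0" using e by simp
        have Xg: "X > e\<^sup>2" using c A0 by simp
        define l where "l = 2 * e\<^sup>2 / (X - e\<^sup>2)"
        have lp: "l > 0" using Xg ep by (simp add: l_def)
        have "X \<le> (1 + 1 / l) * e\<^sup>2" using h[OF lp] A0 by simp
        also have "\<dots> = e\<^sup>2 + (X - e\<^sup>2) / 2" using Xg ep by (simp add: l_def field_simps)
        finally show False using Xg by (simp add: field_simps)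
      qed
    next
      case An: False
      then have Ap: "A > 0" using A by simp
      then have e0: "e = 0" using False e by simp
      have Xg: "X > A\<^sup>2" using c e0 by simp
      define l where "l = (X - A\<^sup>2) / (2 * A\<^sup>2)"
      have lp: "l > 0" using Xg Ap by (simp add: l_def)
      have "X \<le> (1 + l) * A\<^sup>2" using h[OF lp] e0 by simp
      also have "\<dots> = A\<^sup>2 + (X - A\<^sup>2) / 2" using Xg Ap by (simp add: l_def field_simps)
      finally show False using Xg by (simp add: field_simps)
    qed
  qed
qed

lemma sq_bound:
  fixes u v l :: real
  assumes l: "l > 0"
  shows "(u + v)\<^sup>2 \<le> (1 + l) * u\<^sup>2 + (1 + 1 / l) * v\<^sup>2"
proof -
  have "0 \<le> (l * u - v)\<^sup>2" by simp
  then have h1: "l * (2 * u * v) \<le> l * (l * u\<^sup>2 + v\<^sup>2 / l)"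
    using l by (simp add: power2_diff power_mult_distrib algebra_simps power2_eq_square)
  then have h2: "2 * u * v \<le> l * u\<^sup>2 + v\<^sup>2 / l" using l by simp
  have "(u + v)\<^sup>2 = u\<^sup>2 + 2 * u * v + v\<^sup>2" by (simp add: power2_sum)
  moreover have "(1 + l) * u\<^sup>2 + (1 + 1 / l) * v\<^sup>2 = u\<^sup>2 + l * u\<^sup>2 + v\<^sup>2 + v\<^sup>2 / l"
    by (simp add: algebra_simps)
  ultimately show ?thesis using h2 by linarith
qed

lemma pw_bound:
  fixes a b :: complex and l :: real
  assumes "l > 0"
  shows "(cmod (a - b))\<^sup>2 \<le> (1 + l) * (cmod a)\<^sup>2 + (1 + 1 / l) * (cmod b)\<^sup>2"
proof -
  have t: "cmod (a - b) \<le> cmod a + cmod b" by (rule norm_triangle_ineq4)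
  have "(cmod (a - b))\<^sup>2 \<le> (cmod a + cmod b)\<^sup>2" using t by (simp add: power_mono)
  also have "\<dots> \<le> (1 + l) * (cmod a)\<^sup>2 + (1 + 1 / l) * (cmod b)\<^sup>2"
    by (rule sq_bound[OF assms])
  finally show ?thesis .
qed

lemma l2_bound:
  fixes D :: "'a::euclidean_space set" and g p :: "'a \<Rightarrow> complex"
  assumes D: "open D" and nn: "\<forall>s\<in>D. \<nu> s \<ge> 0" and int: "set_integrable lebesgue D \<nu>"
    and one: "(LINT s:D|lebesgue. \<nu> s) = 1"
    and g: "g \<in> L2nu D \<nu>"
    and ip: "set_integrable lebesgue D (\<lambda>s. \<nu> s * (cmod (p s))\<^sup>2)"
    and eb: "\<forall>s\<in>D. cmod (g s - p s) \<le> e" and e0: "e \<ge> 0"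
  shows "(LINT s:D|lebesgue. \<nu> s * (cmod (p s))\<^sup>2) \<le> (nu_norm D \<nu> g + e)\<^sup>2"
proof -
  define M where "M = restrict_space lebesgue D"
  note R = restr_facts[OF D, folded M_def]
  have spM: "space M = D" by (simp add: M_def)
  have inu: "integrable M \<nu>" by (rule R(1)[THEN iffD1, OF int])
  have ig: "integrable M (\<lambda>s. \<nu> s * (cmod (g s))\<^sup>2)" using g by (intro R(1)[THEN iffD1]) (simp add: L2nu_def)
  have ipM: "integrable M (\<lambda>s. \<nu> s * (cmod (p s))\<^sup>2)" by (rule R(1)[THEN iffD1, OF ip])
  define A2 where "A2 = integral\<^sup>L M (\<lambda>s. \<nu> s * (cmod (g s))\<^sup>2)"
  have A2: "A2 \<ge> 0" unfolding A2_def
    by (rule integral_nonneg_AE, rule AE_I2) (use nn spM in auto)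
  have nng: "nu_norm D \<nu> g = sqrt A2" unfolding nu_norm_def A2_def by (rule arg_cong[of _ _ sqrt], rule R(2))
  have one': "integral\<^sup>L M \<nu> = 1" using R(2)[symmetric] one by (rule trans)
  have "integral\<^sup>L M (\<lambda>s. \<nu> s * (cmod (p s))\<^sup>2) \<le> (1 + l) * (sqrt A2)\<^sup>2 + (1 + 1 / l) * e\<^sup>2"
    if lp: "l > 0" for l
  proof -
    have "integral\<^sup>L M (\<lambda>s. \<nu> s * (cmod (p s))\<^sup>2)
       \<le> integral\<^sup>L M (\<lambda>s. (1 + l) * (\<nu> s * (cmod (g s))\<^sup>2) + ((1 + 1 / l) * e\<^sup>2) * \<nu> s)"
    proof (rule integral_mono_AE)
      show "integrable M (\<lambda>s. (1 + l) * (\<nu> s * (cmod (g s))\<^sup>2) + ((1 + 1 / l) * e\<^sup>2) * \<nu> s)"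
        using ig inu by simp
      show "AE x in M. \<nu> x * (cmod (p x))\<^sup>2 \<le> (1 + l) * (\<nu> x * (cmod (g x))\<^sup>2) + ((1 + 1 / l) * e\<^sup>2) * \<nu> x"
      proof (rule AE_I2)
        fix x assume "x \<in> space M"
        then have x: "x \<in> D" using spM by simp
        have nx: "\<nu> x \<ge> 0" using nn x by simp
        have pe: "p x = g x - (g x - p x)" by simp
        have "(cmod (p x))\<^sup>2 \<le> (1 + l) * (cmod (g x))\<^sup>2 + (1 + 1 / l) * (cmod (g x - p x))\<^sup>2"
          using pw_bound[OF lp, of "g x" "g x - p x"] by simp
        also have "\<dots> \<le> (1 + l) * (cmod (g x))\<^sup>2 + (1 + 1 / l) * e\<^sup>2"
          using eb x lp by (intro add_left_mono mult_left_mono power_mono) auto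
        finally have "\<nu> x * (cmod (p x))\<^sup>2 \<le> \<nu> x * ((1 + l) * (cmod (g x))\<^sup>2 + (1 + 1 / l) * e\<^sup>2)"
          using nx by (rule mult_left_mono)
        then show "\<nu> x * (cmod (p x))\<^sup>2 \<le> (1 + l) * (\<nu> x * (cmod (g x))\<^sup>2) + ((1 + 1 / l) * e\<^sup>2) * \<nu> x"
          by (simp add: algebra_simps)
      qed
    qed (use ipM in simp)
    also have "\<dots> = (1 + l) * A2 + ((1 + 1 / l) * e\<^sup>2) * integral\<^sup>L M \<nu>"
      using ig inu by (simp add: A2_def)
    finally show ?thesis using one' A2 by simp
  qed
  then have "integral\<^sup>L M (\<lambda>s. \<nu> s * (cmod (p s))\<^sup>2) \<le> (sqrt A2 + e)\<^sup>2"
    using A2 by (intro lam_bound e0) auto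
  moreover have "set_lebesgue_integral lebesgue D (\<lambda>s. \<nu> s * (cmod (p s))\<^sup>2)
     = integral\<^sup>L M (\<lambda>s. \<nu> s * (cmod (p s))\<^sup>2)" by (rule R(2))
  ultimately show ?thesis using nng by simp
qed



lemma core:
  fixes D :: "'a::euclidean_space set" and \<nu> :: "'a \<Rightarrow> real"
    and \<phi> :: "nat \<Rightarrow> 'a \<Rightarrow> complex" and t :: "nat \<Rightarrow> 'a" and N K :: nat
  assumes D: "open D"
    and nn: "\<forall>s\<in>D. \<nu> s \<ge> 0" and int: "set_integrable lebesgue D \<nu>" and one: "(LINT s:D|lebesgue. \<nu> s) = 1"
    and L2: "\<forall>i. \<phi> i \<in> L2nu D \<nu> \<and> \<phi> i \<in> Linf D"
    and orth: "\<forall>i j. nu_inner D \<nu> (\<phi> i) (\<phi> j) = (if i = j then 1 else 0)"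
    and inj: "inj_on t {..<N}" and tcl: "\<forall>n<N. t n \<in> closure D"
    and tpos: "\<forall>n<N. qweight D \<nu> N t n > 0"
    and y: "y \<in> unit_sphere N" and g: "g \<in> Gset D \<nu> N t y"
    and p: "p \<in> PhiK \<phi> K" and p0: "p \<noteq> (\<lambda>_. 0)"
    and bdd: "bdd_above ((\<lambda>s. cmod (g s - p s)) ` closure D)"
  shows "ratio D \<nu> g p \<le> adj_norm D \<nu> N t \<phi> K y"
proof -
  define e where "e = unorm (closure D) (\<lambda>s. g s - p s)"
  define A where "A = nu_norm D \<nu> g"
  have eb: "cmod (g s - p s) \<le> e" if "s \<in> closure D" for s
    unfolding e_def unorm_def using bdd that by (rule cSUP_upper2) simp
  have y1: "(\<Sum>n<N. (cmod (y n))\<^sup>2) = 1" using y by (simp add: unit_sphere_def)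
  have N0: "N > 0"
  proof (rule ccontr)
    assume "\<not> N > 0" then have "N = 0" by simp
    then show False using y1 by simp
  qed
  have e0: "e \<ge> 0" using eb[of "t 0"] tcl N0 by (meson norm_ge_zero order_trans)
  have A0: "A \<ge> 0" unfolding A_def nu_norm_def set_lebesgue_integral_def
    by (intro real_sqrt_ge_zero integral_nonneg_AE AE_I2) (use nn in \<open>auto simp: indicator_def\<close>)
  obtain c where pc: "p = (\<lambda>s. \<Sum>i<K. c i * \<phi> i s)" using p by (auto simp: PhiK_def)
  have tsum: "(\<Sum>n<N. qweight D \<nu> N t n) \<le> 1"
    using sum_qweight[OF D nn int inj] one by simp
  have gt: "\<forall>n<N. g (t n) = y n / complex_of_real (sqrt (qweight D \<nu> N t n))"
    using g by (simp add: Gset_def)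
  have ebt: "\<forall>n<N. cmod (g (t n) - p (t n)) \<le> e" using eb tcl by blast
  have disc': "1 - e \<le> adj_norm D \<nu> N t \<phi> K y * L2_set (\<lambda>i. cmod (c i)) {..<K}"
    unfolding adj_norm_def Umat_def
    by (rule disc[where gt="\<lambda>n. g (t n)" and pt="\<lambda>n. p (t n)" and ph="\<lambda>i n. \<phi> i (t n)",
          OF y1 tpos tsum gt _ ebt e0]) (simp add: pc)
  define C where "C = L2_set (\<lambda>i. cmod (c i)) {..<K}"
  have os: "set_integrable lebesgue D (\<lambda>s. \<nu> s * (cmod (p s))\<^sup>2)
     \<and> (LINT s:D|lebesgue. \<nu> s * (cmod (p s))\<^sup>2) = (\<Sum>i<K. (cmod (c i))\<^sup>2)"
    unfolding pc using orth_sum[OF D nn int _ orth] L2 by blast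
  have "(LINT s:D|lebesgue. \<nu> s * (cmod (p s))\<^sup>2) \<le> (A + e)\<^sup>2"
    unfolding A_def
    by (rule l2_bound[OF D nn int one]) (use L2 g os eb e0 closure_subset in \<open>auto simp: Gset_def\<close>)
  then have "C\<^sup>2 \<le> (A + e)\<^sup>2" using os by (simp add: C_def L2_set_def sum_nonneg)
  then have CAe: "C \<le> A + e" using A0 e0 by (simp add: power2_le_iff_abs_le)
  have Cpos: "C > 0"
  proof -
    obtain i where i: "i < K" "c i \<noteq> 0"
    proof (rule ccontr)
      assume "\<not> thesis"
      then have "\<forall>i<K. c i = 0" using that by blast
      then have "p = (\<lambda>_. 0)" unfolding pc by simp
      then show False using p0 by simp
    qed
    have "0 < (cmod (c i))\<^sup>2" using i by simp
    also have "\<dots> \<le> (\<Sum>i<K. (cmod (c i))\<^sup>2)"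
      using i by (intro member_le_sum) auto
    finally show ?thesis by (simp add: C_def L2_set_def)
  qed
  have adj0: "adj_norm D \<nu> N t \<phi> K y \<ge> 0" by (simp add: adj_norm_def sum_nonneg)
  show ?thesis
  proof (cases "1 - e \<le> 0")
    case True
    have "ratio D \<nu> g p = (1 - e) / (A + e)" by (simp add: ratio_def A_def e_def)
    also have "\<dots> \<le> 0" using True A0 e0 by (intro divide_nonpos_nonneg) auto
    finally show ?thesis using adj0 by simp
  next
    case False
    have "ratio D \<nu> g p = (1 - e) / (A + e)" by (simp add: ratio_def A_def e_def)
    also have "\<dots> \<le> (1 - e) / C" using False Cpos CAe by (intro divide_left_mono) auto
    also have "\<dots> \<le> adj_norm D \<nu> N t \<phi> K y" using disc' Cpos
      by (simp add: C_def pos_divide_le_eq)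
    finally show ?thesis .
  qed
qed

theorem lemma6p2:
  fixes D :: "'a::euclidean_space set" and \<nu> :: "'a \<Rightarrow> real"
    and \<phi> :: "nat \<Rightarrow> 'a \<Rightarrow> complex" and t :: "nat \<Rightarrow> 'a" and N K :: nat
  assumes "open D" and "connected D"
    and "\<forall>s\<in>D. \<nu> s \<ge> 0" and "set_integrable lebesgue D \<nu>" and "(LINT s:D|lebesgue. \<nu> s) = 1"
    and "\<forall>i. \<phi> i \<in> L2nu D \<nu> \<and> \<phi> i \<in> Linf D"
    and "\<forall>i j. nu_inner D \<nu> (\<phi> i) (\<phi> j) = (if i = j then 1 else 0)"
    and "inj_on t {..<N}" and "\<forall>n<N. t n \<in> closure D"
    and "\<forall>n<N. qweight D \<nu> N t n > 0"
  shows "sigma_min D \<nu> N t \<phi> K \<ge>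
    (INF y\<in>unit_sphere N. SUP g\<in>Gset D \<nu> N t y.
       SUP p\<in>{p \<in> PhiK \<phi> K. p \<noteq> (\<lambda>_. 0) \<and> bdd_above ((\<lambda>s. cmod (g s - p s)) ` closure D)}.
         ereal (ratio D \<nu> g p))"
  unfolding sigma_min_def
proof (rule INF_mono)
  fix y assume y: "y \<in> unit_sphere N"
  show "\<exists>y'\<in>unit_sphere N. (SUP g\<in>Gset D \<nu> N t y'.
       SUP p\<in>{p \<in> PhiK \<phi> K. p \<noteq> (\<lambda>_. 0) \<and> bdd_above ((\<lambda>s. cmod (g s - p s)) ` closure D)}.
         ereal (ratio D \<nu> g p)) \<le> ereal (adj_norm D \<nu> N t \<phi> K y)"
  proof (intro bexI[OF _ y] SUP_least)
    fix g p assume g: "g \<in> Gset D \<nu> N t y"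
      and p: "p \<in> {p \<in> PhiK \<phi> K. p \<noteq> (\<lambda>_. 0) \<and> bdd_above ((\<lambda>s. cmod (g s - p s)) ` closure D)}"
    show "ereal (ratio D \<nu> g p) \<le> ereal (adj_norm D \<nu> N t \<phi> K y)"
      using core[OF assms(1,3,4,5,6,7,8,9,10) y g] p by auto
  qed
qed


end
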